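(* Let $W_{-1}$ be the $2\pi$-periodic function given on $[-\pi,\pi]$ by $W_{-1}(x)=|\sin x|\sin^2(x/2)$ for $|x|\le\frac{2\pi}{3}$ and $W_{-1}(x)=\frac{3\sqrt3}{8}$ for $\frac{2\pi}3\le|x|\le\pi$. For any $\theta\in(0,1)$, if $\delta^*>0$ is small enough, then for any $x^*\in(-\delta^*,\delta^* )$ there exists a positive function $\widetilde W_\theta\in W^{1,\infty}(\mathbb R)$ with $\sin(x)\widetilde W_\theta'(x)\ge0$ on $\mathbb R$ such that for every function $f$ on $[-\pi-x^*,\pi-x^*]$ (with the right-hand side finite), $$\Big\|\frac{\sin(x)\int_0^xf(\bar x)\,d\bar x}{W_{-1}\widetilde W_\theta}\Big\|_{L^\infty([-\pi-x^*,\pi-x^*])}\le\theta\Big\|\frac{f}{W_{-1}\widetilde W_\theta}\Big\|_{L^\infty([-\pi-x^*,\pi-x^*])}.$$ *)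

theory Defs
  imports "HOL-Probability.Probability"
begin

definition Wm1 :: "real \<Rightarrow> real" where
  "Wm1 x = (let y = x - 2 * pi * of_int \<lfloor>(x + pi) / (2 * pi)\<rfloor> in
     if \<bar>y\<bar> \<le> 2 * pi / 3 then \<bar>sin y\<bar> * (sin (y / 2))^2 else 3 * sqrt 3 / 8)"

text \<open>W^{1,infinity}(R): bounded Lipschitz functions (Lipschitz representative).\<close>
definition W1inf :: "(real \<Rightarrow> real) \<Rightarrow> bool" where
  "W1inf g \<longleftrightarrow> bounded (range g) \<and> (\<exists>L. L-lipschitz_on UNIV g)"

definition Linf_norm :: "real \<Rightarrow> real \<Rightarrow> (real \<Rightarrow> real) \<Rightarrow> ereal" where
  "Linf_norm a b g = esssup (restrict_space lebesgue {a..b}) (\<lambda>x. ereal \<bar>g x\<bar>)"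

end

theory Submission imports Defs begin

definition H :: "real \<Rightarrow> real" where
  "H s = (if s \<le> 2*pi/3 then sin s * (sin (s/2))^2 else 3 * sqrt 3 / 8)"

lemma h_deriv: "((\<lambda>u. sin u * (sin (u/2))^2) has_real_derivative (sin (s/2) * sin (3 * s / 2))) (at s)"
proof -
  have "((\<lambda>s. sin s * (sin (s/2))^2) has_real_derivative
     (cos s * (sin (s/2))^2 + sin s * (2 * sin (s/2) * (cos (s/2) * (1/2))))) (at s)"
    by (auto intro!: derivative_eq_intros)
  moreover have "cos s * (sin (s/2))^2 + sin s * (2 * sin (s/2) * (cos (s/2) * (1/2)))
      = sin (s/2) * sin (3 * s / 2)"
  proof -
    have "sin (3 * s / 2) = sin (s + s/2)" by (simp add: field_simps)
    also have "\<dots> = sin s * cos (s/2) + cos s * sin (s/2)" by (rule sin_add)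
    finally show ?thesis by (simp add: power2_eq_square algebra_simps)
  qed
  ultimately show ?thesis by simp
qed

lemma h_mono: assumes "0 \<le> s" "s \<le> t" "t \<le> 2*pi/3"
  shows "sin s * (sin (s/2))^2 \<le> sin t * (sin (t/2))^2"
proof (rule deriv_nonneg_imp_mono[OF h_deriv])
  fix x assume x: "x \<in> {s..t}"
  have "0 \<le> sin (x/2)" using x assms by (intro sin_ge_zero) auto
  moreover have "0 \<le> sin (3 * x / 2)" using x assms by (intro sin_ge_zero) auto
  ultimately show "0 \<le> sin (x/2) * sin (3 * x / 2)" by simp
qed (use assms in auto)

lemma h_top: "sin (2*pi/3) * (sin ((2*pi/3)/2))^2 = 3 * sqrt 3 / 8"
proof -
  have "sin (2*pi/3) = sin (pi - pi/3)" by (simp add: field_simps)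
  also have "\<dots> = sin (pi/3)" by (rule sin_pi_minus)
  also have "\<dots> = sqrt 3 / 2" by (rule sin_60)
  finally have 1: "sin (2*pi/3) = sqrt 3 / 2" .
  have 2: "sin ((2*pi/3)/2) = sqrt 3 / 2" using sin_60 by (simp add: field_simps)
  show ?thesis unfolding 1 2 by (simp add: power2_eq_square field_simps)
qed

lemma H_mono: assumes "0 \<le> s" "s \<le> t" shows "H s \<le> H t"
proof (cases "t \<le> 2*pi/3")
  case True then show ?thesis using assms h_mono by (simp add: H_def)
next
  case False
  show ?thesis
  proof (cases "s \<le> 2*pi/3")
    case True
    have "sin s * (sin (s/2))^2 \<le> 3 * sqrt 3 / 8"
      using h_mono[OF assms(1) True order_refl] h_top by simp
    then show ?thesis using True False by (simp add: H_def)
  qed (use False in \<open>simp add: H_def\<close>)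
qed

lemma H_pos: assumes "0 < s" shows "0 < H s"
proof (cases "s \<le> 2*pi/3")
  case True
  have "0 < sin s" using assms True pi_gt3 by (intro sin_gt_zero) auto
  moreover have "0 < sin (s/2)" using assms True pi_gt3 by (intro sin_gt_zero) auto
  ultimately show ?thesis using True by (simp add: H_def)
qed (simp add: H_def)

lemma H_nonneg: "0 \<le> s \<Longrightarrow> 0 \<le> H s"
  using H_pos[of s] by (cases "s = 0") (auto simp: H_def)

lemma H_le1: assumes "0 \<le> s" shows "H s \<le> 1"
proof -
  have "H s \<le> H (s + 2*pi)" using assms by (intro H_mono) auto
  also have "\<dots> = 3 * sqrt 3 / 8" using assms pi_gt3 by (simp add: H_def)
  also have "\<dots> \<le> 1"
  proof -
    have "sqrt 3 < 2" by (rule real_less_lsqrt) auto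
    then show ?thesis by simp
  qed
  finally show ?thesis .
qed

lemma Wm1_eq: assumes "\<bar>x\<bar> < 4*pi/3" shows "Wm1 x = H \<bar>x\<bar>"
proof -
  consider "\<bar>x\<bar> < pi" | "pi \<le> x" | "x = -pi" | "x < -pi" by linarith
  then show ?thesis
  proof cases
    case 1
    have "\<lfloor>(x + pi) / (2 * pi)\<rfloor> = 0" using 1 by (auto simp: floor_eq_iff field_simps abs_if split: if_splits)
    then have "Wm1 x = (if \<bar>x\<bar> \<le> 2 * pi / 3 then \<bar>sin x\<bar> * (sin (x / 2))^2 else 3 * sqrt 3 / 8)"
      by (simp add: Wm1_def)
    moreover have "\<bar>sin x\<bar> * (sin (x / 2))^2 = sin \<bar>x\<bar> * (sin (\<bar>x\<bar> / 2))^2"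
    proof (cases "x \<ge> 0")
      case True
      then show ?thesis using 1 by (simp add: sin_ge_zero)
    next
      case False
      have "sin (-x) \<ge> 0" using 1 False by (intro sin_ge_zero) auto
      then show ?thesis using False by (simp add: power2_eq_square)
    qed
    ultimately show ?thesis by (simp add: H_def)
  next
    case 2
    have fl: "\<lfloor>(x + pi) / (2 * pi)\<rfloor> = 1" using 2 assms by (simp add: floor_eq_iff field_simps)
    have "\<not> \<bar>x - 2*pi\<bar> \<le> 2*pi/3" using 2 assms by auto
    then have "Wm1 x = 3 * sqrt 3/8" using fl by (simp add: Wm1_def Let_def)
    moreover have "H \<bar>x\<bar> = 3 * sqrt 3 / 8" using 2 pi_gt3 by (simp add: H_def)
    ultimately show ?thesis by simp
  next
    case 3
    then show ?thesis by (simp add: Wm1_def H_def)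
  next
    case 4
    have fl: "\<lfloor>(x + pi) / (2 * pi)\<rfloor> = -1" using 4 assms by (simp add: floor_eq_iff field_simps)
    have "\<not> \<bar>x + 2*pi\<bar> \<le> 2*pi/3" using 4 assms by auto
    then have "Wm1 x = 3 * sqrt 3/8" using fl by (simp add: Wm1_def Let_def)
    moreover have "H \<bar>x\<bar> = 3 * sqrt 3 / 8" using 4 pi_gt3 by (simp add: H_def)
    ultimately show ?thesis by simp
  qed
qed

lemma Wm1_meas[measurable]: "Wm1 \<in> borel_measurable borel"
  unfolding Wm1_def Let_def by measurable

definition Wt :: "real \<Rightarrow> real \<Rightarrow> real" where
  "Wt K x = exp (K * min \<bar>x\<bar> pi)"

lemma Wt_pos: "Wt K x > 0" by (simp add: Wt_def)

lemma exp_lip1: fixes a b c :: real assumes "b \<le> a" "a \<le> c" shows "exp a - exp b \<le> exp c * (a - b)"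
proof -
  have "exp a - exp b = exp a * (1 - exp (b - a))" using exp_add[of a "b - a"] by (simp add: algebra_simps)
  also have "\<dots> \<le> exp a * (a - b)"
  proof (intro mult_left_mono)
    have "1 + (b - a) \<le> exp (b - a)" by (rule exp_ge_add_one_self)
    then show "1 - exp (b - a) \<le> a - b" by linarith
  qed simp
  also have "\<dots> \<le> exp c * (a - b)" using assms by (intro mult_right_mono) auto
  finally show ?thesis .
qed

lemma exp_lip: fixes a b c :: real assumes "a \<le> c" "b \<le> c" shows "\<bar>exp a - exp b\<bar> \<le> exp c * \<bar>a - b\<bar>"
proof (cases "b \<le> a")
  case True
  then have "exp b \<le> exp a" by simp
  then show ?thesis using exp_lip1[OF True assms(1)] True by simp
next
  case False
  then have "exp a \<le> exp b" by simp
  then show ?thesis using exp_lip1[of a b c] assms False by simp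
qed

lemma Wt_W1inf: assumes "K \<ge> 0" shows "W1inf (Wt K)"
  unfolding W1inf_def
proof
  show "bounded (range (Wt K))"
    unfolding bounded_iff
  proof (intro exI ballI)
    fix y assume "y \<in> range (Wt K)"
    then obtain x where "y = Wt K x" by auto
    then show "norm y \<le> exp (K * pi)" using assms
      by (auto simp: Wt_def intro!: mult_left_mono)
  qed
  show "\<exists>L. L-lipschitz_on UNIV (Wt K)"
  proof (intro exI lipschitz_onI)
    fix x y :: real
    have "\<bar>exp (K * min \<bar>x\<bar> pi) - exp (K * min \<bar>y\<bar> pi)\<bar> \<le> exp (K * pi) * \<bar>K * min \<bar>x\<bar> pi - K * min \<bar>y\<bar> pi\<bar>"
      using assms by (intro exp_lip mult_left_mono) auto
    also have "\<bar>K * min \<bar>x\<bar> pi - K * min \<bar>y\<bar> pi\<bar> = K * \<bar>min \<bar>x\<bar> pi - min \<bar>y\<bar> pi\<bar>"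
      using assms by (simp add: abs_mult flip: right_diff_distrib)
    also have "\<bar>min \<bar>x\<bar> pi - min \<bar>y\<bar> pi\<bar> \<le> \<bar>x - y\<bar>" by (auto simp: min_def)
    finally show "dist (Wt K x) (Wt K y) \<le> (exp (K * pi) * K) * dist x y"
      using assms by (simp add: Wt_def dist_real_def mult_left_mono mult.assoc)
  qed (use assms in auto)
qed

lemma Wt_deriv_pt:
  assumes "K \<ge> 0" "x \<noteq> 0" "x \<noteq> pi" "x \<noteq> -pi"
  shows "Wt K differentiable (at x) \<and> sin x * deriv (Wt K) x \<ge> 0"
proof -
  have "\<exists>D. (Wt K has_real_derivative D) (at x) \<and> sin x * D \<ge> 0"
  proof -
    consider "0 < x \<and> x < pi" | "-pi < x \<and> x < 0" | "pi < \<bar>x\<bar>" using assms by linarith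
    then show ?thesis
    proof cases
      case 1
      have d: "((\<lambda>t. exp (K * t)) has_real_derivative (exp (K * x) * K)) (at x)"
        by (auto intro!: derivative_eq_intros)
      have "(Wt K has_real_derivative (exp (K * x) * K)) (at x)"
        by (rule has_field_derivative_transform_within_open[OF d, of "{0<..<pi}"])
           (use 1 in \<open>auto simp: Wt_def\<close>)
      moreover have "sin x \<ge> 0" using 1 by (intro sin_ge_zero) auto
      ultimately show ?thesis using assms by (intro exI[of _ "exp (K * x) * K"]) auto
    next
      case 2
      have d: "((\<lambda>t. exp (K * (- t))) has_real_derivative (exp (K * (- x)) * (K * -1))) (at x)"
        by (auto intro!: derivative_eq_intros)
      have "(Wt K has_real_derivative (exp (K * (- x)) * (K * -1))) (at x)"
        by (rule has_field_derivative_transform_within_open[OF d, of "{-pi<..<0}"])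
           (use 2 in \<open>auto simp: Wt_def\<close>)
      moreover have "sin x \<le> 0" using 2 sin_ge_zero[of "-x"] by auto
      ultimately show ?thesis using assms
        by (intro exI[of _ "exp (K * (- x)) * (K * -1)"]) (auto simp: mult_nonpos_nonpos mult_nonpos_nonneg)
    next
      case 3
      have d: "((\<lambda>t. exp (K * pi)) has_real_derivative 0) (at x)"
        by (auto intro!: derivative_eq_intros)
      have "(Wt K has_real_derivative 0) (at x)"
        by (rule has_field_derivative_transform_within_open[OF d, of "{t. pi < \<bar>t\<bar>}"])
           (use 3 in \<open>auto simp: Wt_def intro!: open_Collect_less continuous_intros\<close>)
      then show ?thesis by auto
    qed
  qed
  then obtain D where D: "(Wt K has_real_derivative D) (at x)" "sin x * D \<ge> 0" by auto
  have "deriv (Wt K) x = D" using D(1) by (rule DERIV_imp_deriv)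
  moreover have "Wt K differentiable (at x)" using D(1) by (auto simp: real_differentiable_def)
  ultimately show ?thesis using D(2) by simp
qed

lemma Wt_AE: assumes "K \<ge> 0"
  shows "AE x in lborel. Wt K differentiable (at x) \<and> sin x * deriv (Wt K) x \<ge> 0"
proof -
  have "AE x in lborel. x \<noteq> 0 \<and> x \<noteq> pi \<and> x \<noteq> -pi"
    by (intro eventually_conj AE_lborel_singleton)
  then show ?thesis by eventually_elim (use Wt_deriv_pt assms in blast)
qed

lemma exp_int:
  fixes a b c s :: real
  assumes "a \<le> b" "s \<noteq> 0"
  shows "set_integrable lebesgue {a<..<b} (\<lambda>t. c * exp (s * t))"
    "(LINT t:{a<..<b}|lebesgue. c * exp (s * t)) = c * (exp (s * b) - exp (s * a)) / s"
proof -
  have "continuous_on {a..b} (\<lambda>t. c * exp (s * t))" by (intro continuous_intros)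
  then have i1: "set_integrable lebesgue {a..b} (\<lambda>t. c * exp (s * t))"
    by (rule absolutely_integrable_continuous_real)
  then show i2: "set_integrable lebesgue {a<..<b} (\<lambda>t. c * exp (s * t))"
    by (rule set_integrable_subset) auto
  have "(LINT t:{a<..<b}|lebesgue. c * exp (s * t)) = integral {a<..<b} (\<lambda>t. c * exp (s * t))"
    by (rule set_lebesgue_integral_eq_integral(2)[OF i2])
  also have "\<dots> = integral {a..b} (\<lambda>t. c * exp (s * t))"
    by (rule integral_open_interval_real[symmetric])
  also have "\<dots> = c * exp (s * b) / s - c * exp (s * a) / s"
  proof (rule integral_unique, rule fundamental_theorem_of_calculus[OF assms(1)])
    fix x assume "x \<in> {a..b}"
    have "((\<lambda>t. c * exp (s * t) / s) has_real_derivative c * exp (s * t) * s / s) (at x within {a..b})"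
      if "t = x" for t
      using that by (auto intro!: derivative_eq_intros)
    then show "((\<lambda>t. c * exp (s * t) / s) has_vector_derivative c * exp (s * x)) (at x within {a..b})"
      using assms by (simp add: has_real_derivative_iff_has_vector_derivative[symmetric])
  qed
  finally show "(LINT t:{a<..<b}|lebesgue. c * exp (s * t)) = c * (exp (s * b) - exp (s * a)) / s"
    by (simp add: diff_divide_distrib right_diff_distrib)
qed

lemma int_bound:
  fixes a b c s :: real and f :: "real \<Rightarrow> real"
  assumes "a \<le> b" "s \<noteq> 0" "set_integrable lebesgue {a<..<b} f"
    "AE t in lebesgue. t \<in> {a<..<b} \<longrightarrow> \<bar>f t\<bar> \<le> c * exp (s * t)"
  shows "\<bar>LINT t:{a<..<b}|lebesgue. f t\<bar> \<le> c * (exp (s * b) - exp (s * a)) / s"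
proof -
  have "\<bar>LINT t:{a<..<b}|lebesgue. f t\<bar> \<le> (LINT t:{a<..<b}|lebesgue. norm (f t))"
    using set_integral_norm_bound[OF assms(3)] by simp
  also have "\<dots> \<le> (LINT t:{a<..<b}|lebesgue. c * exp (s * t))"
    using assms(4) by (intro set_integral_mono_AE exp_int assms set_integrable_norm) auto
  also have "\<dots> = c * (exp (s * b) - exp (s * a)) / s" by (rule exp_int(2)[OF assms(1,2)])
  finally show ?thesis .
qed


theorem lemma3p3:
  fixes \<theta> :: real
  assumes "0 < \<theta>" and "\<theta> < 1"
  shows "\<exists>\<delta>0>0. \<forall>\<delta>s. 0 < \<delta>s \<and> \<delta>s < \<delta>0 \<longrightarrow>
    (\<forall>xs. \<bar>xs\<bar> < \<delta>s \<longrightarrow>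
      (\<exists>Wt :: real \<Rightarrow> real.
         (\<forall>x. Wt x > 0) \<and> W1inf Wt \<and>
         (AE x in lborel. Wt differentiable (at x) \<and> sin x * deriv Wt x \<ge> 0) \<and>
         (\<forall>f :: real \<Rightarrow> real.
            f \<in> borel_measurable (restrict_space lebesgue {-pi-xs..pi-xs}) \<and>
            Linf_norm (-pi-xs) (pi-xs) (\<lambda>x. f x / (Wm1 x * Wt x)) < \<infinity> \<longrightarrow>
            Linf_norm (-pi-xs) (pi-xs)
              (\<lambda>x. sin x * interval_lebesgue_integral lebesgue 0 (ereal x) f / (Wm1 x * Wt x))
            \<le> ereal \<theta> * Linf_norm (-pi-xs) (pi-xs) (\<lambda>x. f x / (Wm1 x * Wt x)))))"
proof -
  define K where "K = 3 / \<theta>"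
  have Kpos: "K > 0" using assms by (simp add: K_def)
  have Kth: "3 / K = \<theta>" using assms by (simp add: K_def)
  show ?thesis
  proof (intro exI[of _ "\<theta>/3"] conjI allI impI)
    show "\<theta>/3 > 0" using assms by simp
    fix \<delta>s xs :: real
    assume \<delta>: "0 < \<delta>s \<and> \<delta>s < \<theta>/3" and xs: "\<bar>xs\<bar> < \<delta>s"
    have xsK: "K * \<bar>xs\<bar> < 1"
    proof -
      have "K * \<bar>xs\<bar> < K * (\<theta>/3)" using \<delta> xs Kpos by (intro mult_strict_left_mono) auto
      also have "\<dots> = 1" using assms by (simp add: K_def)
      finally show ?thesis .
    qed
    have xs1: "\<bar>xs\<bar> < 1/3" using \<delta> xs assms by linarith
    show "\<exists>Wt :: real \<Rightarrow> real.
         (\<forall>x. Wt x > 0) \<and> W1inf Wt \<and>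
         (AE x in lborel. Wt differentiable (at x) \<and> sin x * deriv Wt x \<ge> 0) \<and>
         (\<forall>f :: real \<Rightarrow> real.
            f \<in> borel_measurable (restrict_space lebesgue {-pi-xs..pi-xs}) \<and>
            Linf_norm (-pi-xs) (pi-xs) (\<lambda>x. f x / (Wm1 x * Wt x)) < \<infinity> \<longrightarrow>
            Linf_norm (-pi-xs) (pi-xs)
              (\<lambda>x. sin x * interval_lebesgue_integral lebesgue 0 (ereal x) f / (Wm1 x * Wt x))
            \<le> ereal \<theta> * Linf_norm (-pi-xs) (pi-xs) (\<lambda>x. f x / (Wm1 x * Wt x)))"
    proof (intro exI[of _ "Wt K"] conjI allI impI)
      show "\<And>x. Wt K x > 0" by (rule Wt_pos)
      show "W1inf (Wt K)" using Kpos by (intro Wt_W1inf) simp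
      show "AE x in lborel. Wt K differentiable (at x) \<and> sin x * deriv (Wt K) x \<ge> 0"
        using Kpos by (intro Wt_AE) simp
      fix f :: "real \<Rightarrow> real"
      assume asm: "f \<in> borel_measurable (restrict_space lebesgue {-pi-xs..pi-xs}) \<and>
            Linf_norm (-pi-xs) (pi-xs) (\<lambda>x. f x / (Wm1 x * Wt K x)) < \<infinity>"
      define D where "D = {-pi-xs..pi-xs}"
      define F where "F = (\<lambda>x. interval_lebesgue_integral lebesgue 0 (ereal x) f)"
      define M where "M = Linf_norm (-pi-xs) (pi-xs) (\<lambda>x. f x / (Wm1 x * Wt K x))"
      have fmeas: "f \<in> borel_measurable (restrict_space lebesgue D)" using asm by (simp add: D_def)
      have Mfin: "M < \<infinity>" using asm by (simp add: M_def)
      have Dsets: "D \<in> sets lebesgue" by (simp add: D_def)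
      have spD: "space (restrict_space lebesgue D) = D" by (simp add: space_restrict_space)
      have D0: "0 \<in> D" unfolding D_def using xs1 pi_gt3 by (simp, arith)
      have inD: "\<bar>x\<bar> \<le> pi + \<bar>xs\<bar>" if "x \<in> D" for x using that by (auto simp: D_def)
      have inD43: "\<bar>x\<bar> < 4*pi/3" if "x \<in> D" for x using inD[OF that] xs1 pi_gt3 by linarith
      have Wm1D: "Wm1 x = H \<bar>x\<bar>" if "x \<in> D" for x using Wm1_eq inD43 that by blast
      have expb: "exp (K * \<bar>x\<bar>) \<le> 3 * Wt K x" if "x \<in> D" for x
      proof (cases "\<bar>x\<bar> \<le> pi")
        case True then show ?thesis by (simp add: Wt_def)
      next
        case False
        have "K * \<bar>x\<bar> \<le> K * pi + K * \<bar>xs\<bar>" using inD[OF that] Kpos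
          by (simp add: distrib_left[symmetric] mult_left_mono)
        then have "K * \<bar>x\<bar> \<le> K * pi + 1" using xsK by linarith
        then have "exp (K * \<bar>x\<bar>) \<le> exp (K * pi + 1)" by simp
        also have "\<dots> = exp (K * pi) * exp 1" by (simp add: exp_add)
        also have "\<dots> \<le> exp (K * pi) * 3" using exp_le by (intro mult_left_mono) auto
        finally show ?thesis using False by (simp add: Wt_def)
      qed
      have AEM: "AE x in restrict_space lebesgue D. ereal \<bar>f x / (Wm1 x * Wt K x)\<bar> \<le> M"
        unfolding M_def Linf_norm_def D_def by (rule esssup_AE)
      have measpos: "emeasure (restrict_space lebesgue D) (space (restrict_space lebesgue D)) \<noteq> 0"
        using pi_gt3 by (simp add: spD emeasure_restrict_space Dsets D_def)
      have notF: "\<not> (AE x in restrict_space lebesgue D. False)"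
        using measpos ae_filter_eq_bot_iff eventually_False by metis
      obtain m where Mm: "M = ereal m" and m0: "0 \<le> m"
      proof -
        have "AE x in restrict_space lebesgue D. False" if "M < 0"
          using AEM
        proof eventually_elim
          case (elim x)
          have "0 \<le> ereal \<bar>f x / (Wm1 x * Wt K x)\<bar>" by simp
          then have "0 \<le> M" using elim by (rule order.trans)
          then show False using that by simp
        qed
        then have "\<not> M < 0" using notF by blast
        then show ?thesis using Mfin that by (cases M) auto
      qed
      have AE1: "AE t in lebesgue. t \<in> D \<longrightarrow> \<bar>f t\<bar> \<le> m * H \<bar>t\<bar> * exp (K * \<bar>t\<bar>)"
      proof -
        have a1: "AE t in lebesgue. t \<in> D \<longrightarrow> ereal \<bar>f t / (Wm1 t * Wt K t)\<bar> \<le> M"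
          using AEM Dsets by (subst (asm) AE_restrict_space_iff) auto
        have a2: "AE t in lebesgue. t \<noteq> 0"
          by (rule AE_completion[OF AE_lborel_singleton])
        from a1 a2 show ?thesis
        proof eventually_elim
          case (elim t)
          show ?case
          proof
            assume tD: "t \<in> D"
            have Hp: "H \<bar>t\<bar> > 0" using elim by (intro H_pos) auto
            have gp: "H \<bar>t\<bar> * Wt K t > 0" using Hp Wt_pos by simp
            have "\<bar>f t\<bar> / (H \<bar>t\<bar> * Wt K t) \<le> m"
              using elim tD Mm Hp Wt_pos[of K t] by (simp add: Wm1D abs_mult)
            then have "\<bar>f t\<bar> \<le> m * (H \<bar>t\<bar> * Wt K t)" using gp by (simp add: pos_divide_le_eq)
            also have "\<dots> \<le> m * (H \<bar>t\<bar> * exp (K * \<bar>t\<bar>))"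
              using m0 Hp Kpos by (intro mult_left_mono) (auto simp: Wt_def)
            finally show "\<bar>f t\<bar> \<le> m * H \<bar>t\<bar> * exp (K * \<bar>t\<bar>)" by (simp add: mult.assoc)
          qed
        qed
      qed
      have fint: "set_integrable lebesgue D f"
      proof (rule set_integrable_bound[of lebesgue D "\<lambda>_. m * exp (K * (pi + 1))"])
        show "set_integrable lebesgue D (\<lambda>_. m * exp (K * (pi + 1)))"
          unfolding D_def by (intro absolutely_integrable_continuous_real continuous_intros)
        show "set_borel_measurable lebesgue D f"
          unfolding set_borel_measurable_def
          using fmeas Dsets by (subst (asm) borel_measurable_restrict_space_iff) auto
        show "AE t in lebesgue. t \<in> D \<longrightarrow> norm (f t) \<le> norm (m * exp (K * (pi + 1)))"
          using AE1
        proof eventually_elim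
          case (elim t)
          show ?case
          proof
            assume tD: "t \<in> D"
            have "\<bar>f t\<bar> \<le> m * H \<bar>t\<bar> * exp (K * \<bar>t\<bar>)" using elim tD by blast
            also have "\<dots> \<le> m * 1 * exp (K * (pi + 1))"
            proof (intro mult_mono mult_left_mono)
              show "H \<bar>t\<bar> \<le> 1" by (rule H_le1) simp
              have "\<bar>t\<bar> \<le> pi + 1" using inD[OF tD] xs1 by linarith
              then show "exp (K * \<bar>t\<bar>) \<le> exp (K * (pi + 1))" using Kpos by simp
            qed (use m0 H_nonneg in auto)
            finally show "norm (f t) \<le> norm (m * exp (K * (pi + 1)))" using m0 by simp
          qed
        qed
      qed
      have fH: "f integrable_on D" by (rule set_lebesgue_integral_eq_integral(1)[OF fint])
      have sub_int: "set_integrable lebesgue {u<..<v} f" if "u \<in> D" "v \<in> D" for u v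
        by (rule set_integrable_subset[OF fint]) (use that in \<open>auto simp: D_def\<close>)
      have ei1: "einterval 0 (ereal x) = {0<..<x}" for x by (auto simp: einterval_def)
      have ei2: "einterval (ereal x) 0 = {x<..<0}" for x by (auto simp: einterval_def)
      have Fpos: "F x = (LINT t:{0<..<x}|lebesgue. f t)" if "0 \<le> x" for x
        using that by (simp add: F_def interval_lebesgue_integral_def ei1 ei2)
      have Fneg: "F x = - (LINT t:{x<..<0}|lebesgue. f t)" if "x < 0" for x
        using that by (simp add: F_def interval_lebesgue_integral_def ei1 ei2)
      define a where "a = -pi-xs"
      have aD: "a \<in> D" "a \<le> 0" using D0 by (auto simp: D_def a_def)
      have Fform: "F x = integral {a..x} f - integral {a..0} f" if xD: "x \<in> D" for x
      proof (cases "0 \<le> x")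
        case True
        have "F x = integral {0<..<x} f"
          unfolding Fpos[OF True] by (rule set_lebesgue_integral_eq_integral(2)[OF sub_int[OF D0 xD]])
        also have "\<dots> = integral {0..x} f" by (rule integral_open_interval_real[symmetric])
        also have "\<dots> = integral {a..x} f - integral {a..0} f"
        proof -
          have "f integrable_on {a..x}"
            by (rule integrable_on_subinterval[OF fH]) (use xD in \<open>auto simp: D_def a_def\<close>)
          from Henstock_Kurzweil_Integration.integral_combine[OF aD(2) True this] show ?thesis by simp
        qed
        finally show ?thesis .
      next
        case False
        have "F x = - integral {x<..<0} f"
          using Fneg[of x] False set_lebesgue_integral_eq_integral(2)[OF sub_int[OF xD D0]] by simp
        also have "\<dots> = - integral {x..0} f" by (simp add: integral_open_interval_real)
        also have "\<dots> = integral {a..x} f - integral {a..0} f"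
        proof -
          have "f integrable_on {a..0}"
            by (rule integrable_on_subinterval[OF fH]) (use D0 in \<open>auto simp: D_def a_def\<close>)
          moreover have "a \<le> x" using xD by (simp add: D_def a_def)
          ultimately have "integral {a..x} f + integral {x..0} f = integral {a..0} f"
            using False by (intro Henstock_Kurzweil_Integration.integral_combine) auto
          then show ?thesis by simp
        qed
        finally show ?thesis .
      qed
      have Fcont: "continuous_on D F"
      proof -
        have "continuous_on D (\<lambda>x. integral {a..x} f - integral {a..0} f)"
          using indefinite_integral_continuous_1[of f a "pi - xs"] fH
          by (intro continuous_intros) (auto simp: D_def a_def)
        then show ?thesis by (rule continuous_on_eq) (simp add: Fform)
      qed
      have Fmeas[measurable]: "F \<in> borel_measurable (restrict_space lebesgue D)"
        by (rule continuous_imp_measurable_on_sets_lebesgue[OF Fcont Dsets])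
      have Wm1meas[measurable]: "Wm1 \<in> borel_measurable (restrict_space lebesgue D)"
        using measurable_comp[OF id_borel_measurable_lebesgue_on[of D] Wm1_meas] by (simp add: comp_def)
      have Wtmeas[measurable]: "Wt K \<in> borel_measurable (restrict_space lebesgue D)"
      proof -
        have "continuous_on UNIV (Wt K)" unfolding Wt_def by (intro continuous_intros)
        then have "Wt K \<in> borel_measurable borel" by (rule borel_measurable_continuous_onI)
        from measurable_comp[OF id_borel_measurable_lebesgue_on[of D] this] show ?thesis
          by (simp add: comp_def)
      qed
      have sinmeas[measurable]: "sin \<in> borel_measurable (restrict_space lebesgue D)"
      proof -
        have "continuous_on UNIV (sin :: real \<Rightarrow> real)" by (intro continuous_at_imp_continuous_on ballI isCont_sin)
        then have "(sin :: real \<Rightarrow> real) \<in> borel_measurable borel" by (rule borel_measurable_continuous_onI)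
        from measurable_comp[OF id_borel_measurable_lebesgue_on[of D] this] show ?thesis
          by (simp add: comp_def)
      qed
      have LHSmeas: "(\<lambda>x. ereal \<bar>sin x * F x / (Wm1 x * Wt K x)\<bar>) \<in> borel_measurable (restrict_space lebesgue D)"
      proof -
        have m1: "(\<lambda>x. sin x * F x) \<in> borel_measurable (restrict_space lebesgue D)"
          using sinmeas Fmeas by (rule borel_measurable_times)
        have m2: "(\<lambda>x. Wm1 x * Wt K x) \<in> borel_measurable (restrict_space lebesgue D)"
          using Wm1meas Wtmeas by (rule borel_measurable_times)
        have "(\<lambda>x. sin x * F x / (Wm1 x * Wt K x)) \<in> borel_measurable (restrict_space lebesgue D)"
          using m1 m2 by (rule borel_measurable_divide)
        then have "(\<lambda>x. \<bar>sin x * F x / (Wm1 x * Wt K x)\<bar>) \<in> borel_measurable (restrict_space lebesgue D)"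
          by (rule borel_measurable_abs)
        then show ?thesis by (rule borel_measurable_ereal)
      qed
      have Fbound: "\<bar>F x\<bar> \<le> m * H \<bar>x\<bar> * exp (K * \<bar>x\<bar>) / K" if xD: "x \<in> D" and x0: "x \<noteq> 0" for x
      proof (cases "0 < x")
        case True
        have Fx: "F x = (LINT t:{0<..<x}|lebesgue. f t)" using True by (intro Fpos) simp
        have "\<bar>F x\<bar> \<le> m * H \<bar>x\<bar> * (exp (K * x) - exp (K * 0)) / K"
          unfolding Fx
        proof (intro int_bound sub_int D0 xD)
          show "AE t in lebesgue. t \<in> {0<..<x} \<longrightarrow> \<bar>f t\<bar> \<le> m * H \<bar>x\<bar> * exp (K * t)"
            using AE1
          proof eventually_elim
            case (elim t)
            show ?case
            proof
              assume t: "t \<in> {0<..<x}"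
              then have tD: "t \<in> D" using xD D0 by (auto simp: D_def)
              have "\<bar>f t\<bar> \<le> m * H \<bar>t\<bar> * exp (K * \<bar>t\<bar>)" using elim tD by blast
              also have "\<dots> \<le> m * H \<bar>x\<bar> * exp (K * t)"
              proof -
                have h: "H \<bar>t\<bar> \<le> H \<bar>x\<bar>" using t by (intro H_mono) auto
                have "m * H \<bar>t\<bar> \<le> m * H \<bar>x\<bar>" using h m0 by (rule mult_left_mono)
                then have "m * H \<bar>t\<bar> * exp (K * \<bar>t\<bar>) \<le> m * H \<bar>x\<bar> * exp (K * \<bar>t\<bar>)"
                  by (rule mult_right_mono) simp
                moreover have "0 < t" using t by simp
                ultimately show ?thesis by simp
              qed
              finally show "\<bar>f t\<bar> \<le> m * H \<bar>x\<bar> * exp (K * t)" .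
            qed
          qed
        qed (use Kpos True in auto)
        also have "\<dots> \<le> m * H \<bar>x\<bar> * exp (K * \<bar>x\<bar>) / K"
          using True Kpos m0 H_nonneg[of "\<bar>x\<bar>"] by (intro divide_right_mono mult_left_mono) auto
        finally show ?thesis .
      next
        case False
        then have xn: "x < 0" using x0 by simp
        have "\<bar>F x\<bar> \<le> m * H \<bar>x\<bar> * (exp ((-K) * 0) - exp ((-K) * x)) / (-K)"
          unfolding Fneg[OF xn] abs_minus_cancel
        proof (intro int_bound sub_int D0 xD)
          show "AE t in lebesgue. t \<in> {x<..<0} \<longrightarrow> \<bar>f t\<bar> \<le> m * H \<bar>x\<bar> * exp ((-K) * t)"
            using AE1
          proof eventually_elim
            case (elim t)
            show ?case
            proof
              assume t: "t \<in> {x<..<0}"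
              then have tD: "t \<in> D" using xD D0 by (auto simp: D_def)
              have "\<bar>f t\<bar> \<le> m * H \<bar>t\<bar> * exp (K * \<bar>t\<bar>)" using elim tD by blast
              also have "\<dots> \<le> m * H \<bar>x\<bar> * exp ((-K) * t)"
              proof -
                have h: "H \<bar>t\<bar> \<le> H \<bar>x\<bar>" using t by (intro H_mono) auto
                have "m * H \<bar>t\<bar> \<le> m * H \<bar>x\<bar>" using h m0 by (rule mult_left_mono)
                then have "m * H \<bar>t\<bar> * exp (K * \<bar>t\<bar>) \<le> m * H \<bar>x\<bar> * exp (K * \<bar>t\<bar>)"
                  by (rule mult_right_mono) simp
                moreover have "t < 0" using t by simp
                ultimately show ?thesis by simp
              qed
              finally show "\<bar>f t\<bar> \<le> m * H \<bar>x\<bar> * exp ((-K) * t)" .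
            qed
          qed
        qed (use Kpos xn in auto)
        also have "\<dots> = m * H \<bar>x\<bar> * (exp (K * \<bar>x\<bar>) - 1) / K"
          using xn Kpos by (simp add: field_simps)
        also have "\<dots> \<le> m * H \<bar>x\<bar> * exp (K * \<bar>x\<bar>) / K"
          using Kpos m0 H_nonneg[of "\<bar>x\<bar>"] by (intro divide_right_mono mult_left_mono) auto
        finally show ?thesis .
      qed
      have pw: "\<bar>sin x * F x / (Wm1 x * Wt K x)\<bar> \<le> \<theta> * m" if xD: "x \<in> D" for x
      proof (cases "x = 0")
        case True then show ?thesis using m0 assms by simp
      next
        case False
        have Hp: "H \<bar>x\<bar> > 0" using False by (intro H_pos) auto
        have gp: "H \<bar>x\<bar> * Wt K x > 0" using Hp Wt_pos by simp
        have "\<bar>sin x * F x\<bar> \<le> \<bar>F x\<bar>" by (simp add: abs_mult mult_left_le_one_le)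
        also have "\<dots> \<le> m * H \<bar>x\<bar> * exp (K * \<bar>x\<bar>) / K" by (rule Fbound[OF xD False])
        also have "\<dots> \<le> m * H \<bar>x\<bar> * (3 * Wt K x) / K"
          using expb[OF xD] m0 Hp Kpos by (intro divide_right_mono mult_left_mono) auto
        also have "\<dots> = \<theta> * m * (H \<bar>x\<bar> * Wt K x)"
          using Kth[symmetric] Kpos by (simp add: field_simps)
        finally have "\<bar>sin x * F x\<bar> \<le> \<theta> * m * (H \<bar>x\<bar> * Wt K x)" .
        then show ?thesis using gp Hp Wt_pos[of K x] by (simp add: Wm1D[OF xD] abs_mult pos_divide_le_eq)
      qed
      have "esssup (restrict_space lebesgue D) (\<lambda>x. ereal \<bar>sin x * F x / (Wm1 x * Wt K x)\<bar>) \<le> ereal (\<theta> * m)"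
      proof (rule esssup_I[OF LHSmeas])
        show "AE x in restrict_space lebesgue D. ereal \<bar>sin x * F x / (Wm1 x * Wt K x)\<bar> \<le> ereal (\<theta> * m)"
          by (rule AE_I2) (use pw spD in auto)
      qed
      then show "Linf_norm (-pi-xs) (pi-xs)
              (\<lambda>x. sin x * interval_lebesgue_integral lebesgue 0 (ereal x) f / (Wm1 x * Wt K x))
            \<le> ereal \<theta> * Linf_norm (-pi-xs) (pi-xs) (\<lambda>x. f x / (Wm1 x * Wt K x))"
      proof -
        have eqR: "ereal \<theta> * Linf_norm (-pi-xs) (pi-xs) (\<lambda>x. f x / (Wm1 x * Wt K x)) = ereal (\<theta> * m)"
          unfolding M_def[symmetric] Mm by simp
        have eqL: "Linf_norm (-pi-xs) (pi-xs)
              (\<lambda>x. sin x * interval_lebesgue_integral lebesgue 0 (ereal x) f / (Wm1 x * Wt K x))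
            = esssup (restrict_space lebesgue D) (\<lambda>x. ereal \<bar>sin x * F x / (Wm1 x * Wt K x)\<bar>)"
          unfolding Linf_norm_def F_def D_def by simp
        show ?thesis unfolding eqR eqL by fact
      qed
    qed
  qed
qed

end
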